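(* Let $m,n,p$ be positive integers, $R$ a real $m\times n$ matrix, $K$ a real $p\times n$ matrix and $v\in\mathbb{R}^n$, and assume $\{y\in\mathbb{R}^n:Ky\ge0,\ Ry=0,\ v\cdot y\le0\}=\{0\}$. Let $\pi\in\mathbb{R}^m$ and $\kappa\in\mathbb{R}^p$ satisfy $v'=\pi'R+\kappa'K$. Let $\mathcal{M}=\{a\in\mathbb{R}^m:a'R=b'K\text{ for some }b\in\mathbb{R}^p\}$, suppose $d=\dim\mathcal{M}>0$, let $M$ be a $d\times m$ matrix whose rows form a basis of $\mathcal{M}$, and let $G$ be a $d\times p$ matrix with $MR=GK$. Let $\mathcal{U}=\mathcal{K}\cap\mathbb{R}^p_+$, where $\mathcal{K}$ is the range of $K$. Then $\{u\in\mathcal{U}:Gu=0\text{ and }\kappa\cdot u\le0\}=\{0\}$.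
   Context: Vector inequalities such as $Ky\ge0$ are componentwise; $\mathbb{R}^p_+$ is the nonnegative orthant. *)

theory Defs
  imports "HOL-Analysis.Analysis"
begin

end

theory Submission
  imports Defs
begin

lemma ker_perp_range:
  fixes K :: "real^'n^'p" and z :: "real^'n"
  assumes h: "\<And>y. K *v y = 0 \<Longrightarrow> z \<bullet> y = 0"
  shows "\<exists>b. z = b v* K"
proof -
  let ?S = "range (\<lambda>b. b v* K)"
  have sub: "subspace ?S"
    unfolding subspace_def
  proof (intro conjI ballI allI)
    show "0 \<in> ?S" by (auto intro!: range_eqI[where x=0])
  next
    fix a b assume "a \<in> ?S" "b \<in> ?S"
    then obtain za zb where "a = za v* K" "b = zb v* K" by auto
    thus "a + b \<in> ?S"
      by (auto intro!: range_eqI[where x="za + zb"] simp: vector_matrix_left_distrib)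
  next
    fix c a assume "a \<in> ?S"
    then obtain za where "a = za v* K" by auto
    thus "c *\<^sub>R a \<in> ?S"
      by (auto intro!: range_eqI[where x="c *\<^sub>R za"] simp: scaleR_vector_matrix_assoc)
  qed
  obtain z1 z2 where z1: "z1 \<in> span ?S" and z2: "\<And>w. w \<in> span ?S \<Longrightarrow> orthogonal z2 w"
    and zz: "z = z1 + z2"
    using orthogonal_subspace_decomp_exists[of ?S z] by blast
  have "(K *v z2) \<bullet> (K *v z2) = ((K *v z2) v* K) \<bullet> z2" by (simp add: dot_lmul_matrix)
  also have "\<dots> = 0" using z2[of "(K *v z2) v* K"] by (simp add: span_base orthogonal_def inner_commute)
  finally have "K *v z2 = 0" by simp
  hence "z \<bullet> z2 = 0" using h by blast
  moreover have "z1 \<bullet> z2 = 0" using z2[OF z1] by (simp add: orthogonal_def inner_commute)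
  ultimately have "z2 \<bullet> z2 = 0" using zz by (simp add: inner_add_left)
  hence "z2 = 0" by simp
  hence "z \<in> ?S" using zz z1 sub by (metis add.right_neutral span_subspace subset_refl span_superset)
  thus ?thesis by auto
qed

theorem lemma3p1:
  fixes R :: "real^'n^'m" and K :: "real^'n^'p" and v :: "real^'n"
    and \<pi> :: "real^'m" and \<kappa> :: "real^'p"
    and M :: "real^'m^'d" and G :: "real^'p^'d"
  assumes hyp: "{y. (\<forall>i. 0 \<le> (K *v y) $ i) \<and> R *v y = 0 \<and> v \<bullet> y \<le> 0} = {0}"
    and v_eq: "v = \<pi> v* R + \<kappa> v* K"
    and d_pos: "dim {a :: real^'m. \<exists>b. a v* R = b v* K} > 0"
    and d_eq: "CARD('d) = dim {a :: real^'m. \<exists>b. a v* R = b v* K}"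
    and M_inj: "inj (\<lambda>i. row i M)"
    and M_indep: "independent (range (\<lambda>i. row i M))"
    and M_span: "span (range (\<lambda>i. row i M)) = {a :: real^'m. \<exists>b. a v* R = b v* K}"
    and MG: "M ** R = G ** K"
  shows "{u \<in> range (\<lambda>x. K *v x) \<inter> {u. \<forall>i. 0 \<le> u $ i}. G *v u = 0 \<and> \<kappa> \<bullet> u \<le> 0} = {0}"
proof
  show "{0} \<subseteq> {u \<in> range (\<lambda>x. K *v x) \<inter> {u. \<forall>i. 0 \<le> u $ i}. G *v u = 0 \<and> \<kappa> \<bullet> u \<le> 0}"
    by (auto intro!: range_eqI[where x=0])
next
  show "{u \<in> range (\<lambda>x. K *v x) \<inter> {u. \<forall>i. 0 \<le> u $ i}. G *v u = 0 \<and> \<kappa> \<bullet> u \<le> 0} \<subseteq> {0}"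
  proof
    fix u assume "u \<in> {u \<in> range (\<lambda>x. K *v x) \<inter> {u. \<forall>i. 0 \<le> u $ i}. G *v u = 0 \<and> \<kappa> \<bullet> u \<le> 0}"
    then obtain x where ux: "u = K *v x" and upos: "\<forall>i. 0 \<le> u $ i" and Gu: "G *v u = 0"
      and ku: "\<kappa> \<bullet> u \<le> 0" by auto
    define w where "w = R *v x"
    have Mw: "M *v w = 0"
      using Gu by (simp add: w_def ux matrix_vector_mul_assoc MG)
    have roww: "row i M \<bullet> w = 0" for i
    proof -
      have "(M *v w) $ i = 0" using Mw by simp
      thus ?thesis by (simp add: matrix_vector_mult_def inner_vec_def row_def mult.commute)
    qed
    have Mperp: "a \<bullet> w = 0" if "\<exists>b. a v* R = b v* K" for a
    proof -
      have "a \<in> span (range (\<lambda>i. row i M))" using that M_span by simp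
      hence "orthogonal w a"
        by (rule orthogonal_to_span) (metis orthogonal_def inner_commute roww rangeE)
      thus ?thesis by (simp add: orthogonal_def inner_commute)
    qed
    let ?W = "(\<lambda>z. R *v z) ` {z. K *v z = 0}"
    have subW: "subspace ?W"
      unfolding subspace_def
    proof (intro conjI ballI allI)
      show "0 \<in> ?W" by (auto intro!: image_eqI[where x=0])
    next
      fix a b assume "a \<in> ?W" "b \<in> ?W"
      then obtain za zb where "a = R *v za" "K *v za = 0" "b = R *v zb" "K *v zb = 0" by auto
      thus "a + b \<in> ?W"
        by (auto intro!: image_eqI[where x="za + zb"] simp: matrix_vector_right_distrib)
    next
      fix c a assume "a \<in> ?W"
      then obtain za where "a = R *v za" "K *v za = 0" by auto
      thus "c *\<^sub>R a \<in> ?W"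
        by (auto intro!: image_eqI[where x="c *\<^sub>R za"] simp: matrix_vector_mult_scaleR)
    qed
    obtain w1 w2 where w1: "w1 \<in> span ?W" and w2: "\<And>q. q \<in> span ?W \<Longrightarrow> orthogonal w2 q"
      and ww: "w = w1 + w2"
      using orthogonal_subspace_decomp_exists[of ?W w] by blast
    have "\<exists>b. w2 v* R = b v* K"
    proof (rule ker_perp_range)
      fix y assume "K *v y = 0"
      hence "R *v y \<in> span ?W" by (auto intro: span_base)
      hence "w2 \<bullet> (R *v y) = 0" using w2 by (simp add: orthogonal_def)
      thus "(w2 v* R) \<bullet> y = 0" by (simp add: dot_lmul_matrix)
    qed
    hence "w2 \<bullet> w = 0" using Mperp by blast
    moreover have "w2 \<bullet> w1 = 0" using w2[OF w1] by (simp add: orthogonal_def)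
    ultimately have "w2 \<bullet> w2 = 0" using ww by (simp add: inner_add_right)
    hence "w2 = 0" by simp
    hence "w \<in> ?W" using ww w1 subW by (metis add.right_neutral span_subspace subset_refl span_superset)
    then obtain z where zR: "w = R *v z" and zK: "K *v z = 0" by auto
    define y where "y = x - z"
    have Ky: "K *v y = u" using zK by (simp add: y_def ux matrix_vector_mult_diff_distrib)
    have Ry: "R *v y = 0" using zR by (simp add: y_def w_def matrix_vector_mult_diff_distrib)
    have "v \<bullet> y = \<pi> \<bullet> (R *v y) + \<kappa> \<bullet> (K *v y)"
      by (simp add: v_eq inner_add_left dot_lmul_matrix)
    hence "v \<bullet> y \<le> 0" using Ry Ky ku by simp
    hence "y \<in> {y. (\<forall>i. 0 \<le> (K *v y) $ i) \<and> R *v y = 0 \<and> v \<bullet> y \<le> 0}"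
      using Ky Ry upos by simp
    hence "y = 0" using hyp by blast
    thus "u \<in> {0}" using Ky by simp
  qed
qed

end
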